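(* Let $\alpha(s)=(x(s),0,y(s),0)$, $s\in I$, be a smooth unit-speed curve in $\mathbb{E}^4$ ($x'^2+y'^2=1$) with $x^2+y^2>0$ on the open interval $I$, and let $M$ be the rotation surface $$X(s,t)=\big(x(s)\cos t,\ x(s)\sin t,\ y(s)\cos t,\ y(s)\sin t\big).$$ Assume $M$ is flat (its Gaussian curvature vanishes identically). Then $M$ has pointwise 1-type Gauss map if and only if either $M$ is totally geodesic (an open part of a plane), or $M$ is parametrized by $$X(s,t)=\big(\lambda\cos(b_0s+d)\cos t,\ \lambda\cos(b_0s+d)\sin t,\ \lambda\sin(b_0s+d)\cos t,\ \lambda\sin(b_0s+d)\sin t\big),\qquad b_0^2\lambda^2=1,$$ for some real constants $b_0,\lambda,d$.
   Context: Gauss map: with the orthonormal tangent frame $e_1=\frac{1}{\sqrt{x^2+y^2}}\partial_t$, $e_2=\partial_s$, the Gauss map is $G=e_1\wedge e_2: M\to \Lambda^2\mathbb{E}^4\cong\mathbb{E}^6$ (with the standard inner product $\langle u_1\wedge u_2,v_1\wedge v_2\rangle=\det(\langle u_i,v_j\rangle)$). The Laplacian of a (vector-valued) function $F$ on $M$ is $\Delta F=-\sum_{i=1}^2\big(\tilde\nabla_{e_i}\tilde\nabla_{e_i}F-\tilde\nabla_{\nabla_{e_i}e_i}F\big)$, where $\tilde\nabla$ is the Euclidean connection and $\nabla$ the induced (Levi-Civita) connection of $M$. $M$ has pointwise 1-type Gauss map if $\Delta G=f(G+C)$ for some smooth function $f$ on $M$ and some constant vector $C\in\Lambda^2\mathbb{E}^4$.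 *)

theory Defs
  imports "HOL-Analysis.Analysis"
begin

definition smooth_on1 :: "real set \<Rightarrow> (real \<Rightarrow> real) \<Rightarrow> bool" where
  "smooth_on1 I g \<longleftrightarrow> (\<forall>n. \<forall>s\<in>I. ((deriv ^^ n) g) differentiable (at s))"

definition ps :: "(real \<Rightarrow> real \<Rightarrow> 'a::real_normed_vector) \<Rightarrow> real \<Rightarrow> real \<Rightarrow> 'a" where
  "ps F s t = vector_derivative (\<lambda>u. F u t) (at s)"

definition pt :: "(real \<Rightarrow> real \<Rightarrow> 'a::real_normed_vector) \<Rightarrow> real \<Rightarrow> real \<Rightarrow> 'a" where
  "pt F s t = vector_derivative (\<lambda>u. F s u) (at t)"

definition pd :: "bool \<Rightarrow> (real \<Rightarrow> real \<Rightarrow> real) \<Rightarrow> real \<Rightarrow> real \<Rightarrow> real" where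
  "pd b F = (if b then ps F else pt F)"

definition smooth_on2 :: "(real \<times> real) set \<Rightarrow> (real \<Rightarrow> real \<Rightarrow> real) \<Rightarrow> bool" where
  "smooth_on2 U g \<longleftrightarrow>
     (\<forall>ds::bool list. let h = foldr pd ds g in
        continuous_on U (\<lambda>(s,t). h s t) \<and>
        (\<forall>(s,t)\<in>U. (\<lambda>u. h u t) differentiable (at s) \<and> (\<lambda>u. h s u) differentiable (at t)))"

definition rot_surface :: "(real \<Rightarrow> real) \<Rightarrow> (real \<Rightarrow> real) \<Rightarrow> real \<Rightarrow> real \<Rightarrow> real^4" where
  "rot_surface x y s t = vector [x s * cos t, x s * sin t, y s * cos t, y s * sin t]"

definition frameD :: "(real \<Rightarrow> real) \<Rightarrow> (real \<Rightarrow> real) \<Rightarrow> nat \<Rightarrow>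
    (real \<Rightarrow> real \<Rightarrow> 'a::real_normed_vector) \<Rightarrow> real \<Rightarrow> real \<Rightarrow> 'a" where
  "frameD x y i F s t =
     (if i = 1 then (1 / sqrt ((x s)\<^sup>2 + (y s)\<^sup>2)) *\<^sub>R pt F s t else ps F s t)"

definition frameE :: "(real \<Rightarrow> real) \<Rightarrow> (real \<Rightarrow> real) \<Rightarrow> nat \<Rightarrow> real \<Rightarrow> real \<Rightarrow> real^4" where
  "frameE x y i = frameD x y i (rot_surface x y)"

text \<open>Laplacian
  Delta F = - sum_i (e_i e_i F - (nabla_{e_i} e_i) F), where nabla_{e_i} e_i is the
  tangential part of the Euclidean derivative of e_i along e_i, written in the frame.\<close>
definition laplacian :: "(real \<Rightarrow> real) \<Rightarrow> (real \<Rightarrow> real) \<Rightarrow>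
    (real \<Rightarrow> real \<Rightarrow> 'a::real_normed_vector) \<Rightarrow> real \<Rightarrow> real \<Rightarrow> 'a" where
  "laplacian x y F s t =
     - (\<Sum>i\<in>{1,2::nat}. frameD x y i (frameD x y i F) s t
          - (\<Sum>j\<in>{1,2::nat}. (frameD x y i (frameE x y i) s t \<bullet> frameE x y j s t)
                                 *\<^sub>R frameD x y j F s t))"

definition sff :: "(real \<Rightarrow> real) \<Rightarrow> (real \<Rightarrow> real) \<Rightarrow> nat \<Rightarrow> nat \<Rightarrow> real \<Rightarrow> real \<Rightarrow> real^4" where
  "sff x y i j s t =
     frameD x y i (frameE x y j) s t
     - (\<Sum>k\<in>{1,2::nat}. (frameD x y i (frameE x y j) s t \<bullet> frameE x y k s t) *\<^sub>R frameE x y k s t)"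

text \<open>Gaussian curvature via the Gauss equation K = <h(e1,e1),h(e2,e2)> - |h(e1,e2)|^2.\<close>
definition gauss_curvature :: "(real \<Rightarrow> real) \<Rightarrow> (real \<Rightarrow> real) \<Rightarrow> real \<Rightarrow> real \<Rightarrow> real" where
  "gauss_curvature x y s t =
     sff x y 1 1 s t \<bullet> sff x y 2 2 s t - sff x y 1 2 s t \<bullet> sff x y 1 2 s t"

definition totally_geodesic :: "(real \<Rightarrow> real) \<Rightarrow> (real \<Rightarrow> real) \<Rightarrow> real set \<Rightarrow> bool" where
  "totally_geodesic x y I \<longleftrightarrow>
     (\<forall>s\<in>I. \<forall>t. \<forall>i\<in>{1,2::nat}. \<forall>j\<in>{1,2::nat}. sff x y i j s t = 0)"

text \<open>Wedge product u \<and> v in Lambda^2 E^4 = E^6 (Pluecker coordinates, basis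
  e12,e13,e14,e23,e24,e34; the standard inner product on E^6 is the det-inner product).\<close>
definition wedge4 :: "real^4 \<Rightarrow> real^4 \<Rightarrow> real^6" where
  "wedge4 u v = vector
     [u$1 * v$2 - u$2 * v$1, u$1 * v$3 - u$3 * v$1, u$1 * v$4 - u$4 * v$1,
      u$2 * v$3 - u$3 * v$2, u$2 * v$4 - u$4 * v$2, u$3 * v$4 - u$4 * v$3]"

definition gauss_map :: "(real \<Rightarrow> real) \<Rightarrow> (real \<Rightarrow> real) \<Rightarrow> real \<Rightarrow> real \<Rightarrow> real^6" where
  "gauss_map x y s t = wedge4 (frameE x y 1 s t) (frameE x y 2 s t)"

definition pointwise_1type :: "(real \<Rightarrow> real) \<Rightarrow> (real \<Rightarrow> real) \<Rightarrow> real set \<Rightarrow> bool" where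
  "pointwise_1type x y I \<longleftrightarrow>
     (\<exists>(f :: real \<Rightarrow> real \<Rightarrow> real) (C :: real^6).
        smooth_on2 (I \<times> UNIV) f \<and>
        (\<forall>s\<in>I. \<forall>t. laplacian x y (gauss_map x y) s t = f s t *\<^sub>R (gauss_map x y s t + C)))"

end

theory Submission
  imports Defs
begin


lemma vector_4 [simp]:
 "(vector [a,b,c,d] ::('a::zero)^4)$1 = a"
 "(vector [a,b,c,d] ::('a::zero)^4)$2 = b"
 "(vector [a,b,c,d] ::('a::zero)^4)$3 = c"
 "(vector [a,b,c,d] ::('a::zero)^4)$4 = d"
  unfolding vector_def by simp_all

lemma exhaust_6:
  fixes x :: 6
  shows "x = 1 \<or> x = 2 \<or> x = 3 \<or> x = 4 \<or> x = 5 \<or> x = 6"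
proof (induct x)
  case (of_int z)
  then have "z = 0 \<or> z = 1 \<or> z = 2 \<or> z = 3 \<or> z = 4 \<or> z = 5" by fastforce
  then show ?case by auto
qed

lemma forall_6: "(\<forall>i::6. P i) \<longleftrightarrow> P 1 \<and> P 2 \<and> P 3 \<and> P 4 \<and> P 5 \<and> P 6"
  by (metis exhaust_6)

lemma vector_6 [simp]:
 "(vector [a,b,c,d,e,f] ::('a::zero)^6)$1 = a"
 "(vector [a,b,c,d,e,f] ::('a::zero)^6)$2 = b"
 "(vector [a,b,c,d,e,f] ::('a::zero)^6)$3 = c"
 "(vector [a,b,c,d,e,f] ::('a::zero)^6)$4 = d"
 "(vector [a,b,c,d,e,f] ::('a::zero)^6)$5 = e"
 "(vector [a,b,c,d,e,f] ::('a::zero)^6)$6 = f"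
  unfolding vector_def by simp_all

lemma v4_eq: "(vector [a1,a2,a3,a4] :: real^4) = vector [b1,b2,b3,b4] \<longleftrightarrow> a1=b1 \<and> a2=b2 \<and> a3=b3 \<and> a4=b4"
  by (auto simp: vec_eq_iff forall_4)
lemma v6_eq: "(vector [a1,a2,a3,a4,a5,a6] :: real^6) = vector [b1,b2,b3,b4,b5,b6] \<longleftrightarrow>
   a1=b1 \<and> a2=b2 \<and> a3=b3 \<and> a4=b4 \<and> a5=b5 \<and> a6=b6"
  by (auto simp: vec_eq_iff forall_6)

lemma v4_ops:
  "(vector [a1,a2,a3,a4] :: real^4) + vector [b1,b2,b3,b4] = vector [a1+b1,a2+b2,a3+b3,a4+b4]"
  "(vector [a1,a2,a3,a4] :: real^4) - vector [b1,b2,b3,b4] = vector [a1-b1,a2-b2,a3-b3,a4-b4]"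
  "k *\<^sub>R (vector [a1,a2,a3,a4] :: real^4) = vector [k*a1,k*a2,k*a3,k*a4]"
  "- (vector [a1,a2,a3,a4] :: real^4) = vector [-a1,-a2,-a3,-a4]"
  "(0::real^4) = vector [0,0,0,0]"
  "(vector [a1,a2,a3,a4] :: real^4) \<bullet> vector [b1,b2,b3,b4] = a1*b1+a2*b2+a3*b3+a4*b4"
  by (auto simp: vec_eq_iff forall_4 inner_vec_def sum_4)

lemma v6_ops:
  "(vector [a1,a2,a3,a4,a5,a6] :: real^6) + vector [b1,b2,b3,b4,b5,b6] = vector [a1+b1,a2+b2,a3+b3,a4+b4,a5+b5,a6+b6]"
  "(vector [a1,a2,a3,a4,a5,a6] :: real^6) - vector [b1,b2,b3,b4,b5,b6] = vector [a1-b1,a2-b2,a3-b3,a4-b4,a5-b5,a6-b6]"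
  "k *\<^sub>R (vector [a1,a2,a3,a4,a5,a6] :: real^6) = vector [k*a1,k*a2,k*a3,k*a4,k*a5,k*a6]"
  "- (vector [a1,a2,a3,a4,a5,a6] :: real^6) = vector [-a1,-a2,-a3,-a4,-a5,-a6]"
  "(0::real^6) = vector [0,0,0,0,0,0]"
  by (auto simp: vec_eq_iff forall_6)

lemma v4_decomp: "(vector [a,b,c,d] :: real^4) = a *\<^sub>R axis 1 1 + b *\<^sub>R axis 2 1 + c *\<^sub>R axis 3 1 + d *\<^sub>R axis 4 1"
  by (auto simp: vec_eq_iff forall_4 axis_def)
lemma v6_decomp: "(vector [a,b,c,d,e,f] :: real^6) = a *\<^sub>R axis 1 1 + b *\<^sub>R axis 2 1 + c *\<^sub>R axis 3 1 + d *\<^sub>R axis 4 1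
   + e *\<^sub>R axis 5 1 + f *\<^sub>R axis 6 1"
  by (auto simp: vec_eq_iff forall_6 axis_def)

lemma hvd_scale_const: "(f has_real_derivative d) F \<Longrightarrow> ((\<lambda>u. f u *\<^sub>R (c::'a::real_normed_vector)) has_vector_derivative d *\<^sub>R c) F"
  unfolding has_real_derivative_iff_has_vector_derivative has_vector_derivative_def
  by (drule has_derivative_scaleR_left[where x=c]) (simp add: scaleR_scaleR mult.commute)

lemma vd4:
  assumes "(f1 has_real_derivative d1) F" "(f2 has_real_derivative d2) F"
    "(f3 has_real_derivative d3) F" "(f4 has_real_derivative d4) F"
  shows "((\<lambda>u. vector [f1 u, f2 u, f3 u, f4 u] :: real^4) has_vector_derivative vector [d1,d2,d3,d4]) F"
  unfolding v4_decomp
  by (intro has_vector_derivative_add hvd_scale_const assms)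

lemma vd6:
  assumes "(f1 has_real_derivative d1) F" "(f2 has_real_derivative d2) F"
    "(f3 has_real_derivative d3) F" "(f4 has_real_derivative d4) F"
    "(f5 has_real_derivative d5) F" "(f6 has_real_derivative d6) F"
  shows "((\<lambda>u. vector [f1 u, f2 u, f3 u, f4 u, f5 u, f6 u] :: real^6) has_vector_derivative vector [d1,d2,d3,d4,d5,d6]) F"
  unfolding v6_decomp
  by (intro has_vector_derivative_add hvd_scale_const assms)

lemma pt_eqI: assumes "\<And>v. F s v = h v" "(h has_vector_derivative D) (at t)"
  shows "pt F s t = D"
proof -
  have "(\<lambda>v. F s v) = h" using assms(1) by auto
  then show ?thesis using assms(2) by (simp add: pt_def vector_derivative_at)
qed

lemma ps_eqI: assumes "open I" "s \<in> I" "\<And>u. u \<in> I \<Longrightarrow> F u t = h u" "(h has_vector_derivative D) (at s)"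
  shows "ps F s t = D"
proof -
  have "((\<lambda>u. F u t) has_vector_derivative D) (at s)"
    by (rule has_vector_derivative_transform_within_open[OF assms(4,1,2)]) (use assms(3) in auto)
  then show ?thesis by (simp add: ps_def vector_derivative_at)
qed

lemma deriv_const_open: assumes "open S" "s \<in> S" "\<And>u. u \<in> S \<Longrightarrow> f u = c"
  "(f has_real_derivative D) (at s)" shows "D = 0"
proof -
  have "((\<lambda>u. c) has_real_derivative D) (at s)"
    by (rule has_field_derivative_transform_within_open[OF assms(4,1,2)]) (use assms(3) in auto)
  then show ?thesis using DERIV_const DERIV_unique by blast
qed

lemma const_on_interval: assumes "is_interval (I::real set)" "open I"
  "\<And>s. s \<in> I \<Longrightarrow> (f has_real_derivative 0) (at s)" shows "\<exists>c. \<forall>s\<in>I. f s = c"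
  by (rule has_field_derivative_zero_constant[OF is_interval_convex[OF assms(1)]])
     (use assms(3) has_field_derivative_at_within in blast)




locale rs =
  fixes x y :: "real \<Rightarrow> real" and I :: "real set"
  assumes oI: "open I" and iI: "is_interval I"
    and sx: "smooth_on1 I x" and sy: "smooth_on1 I y"
    and unit0: "\<forall>s\<in>I. (deriv x s)\<^sup>2 + (deriv y s)\<^sup>2 = 1"
    and pos0: "\<forall>s\<in>I. (x s)\<^sup>2 + (y s)\<^sup>2 > 0"
begin

definition "x1 = deriv x"
definition "x2 = deriv x1"
definition "x3 = deriv x2"
definition "y1 = deriv y"
definition "y2 = deriv y1"
definition "y3 = deriv y2"
definition "rho s = (x s)\<^sup>2 + (y s)\<^sup>2"
definition "r s = sqrt (rho s)"
definition "W s = x s * y1 s - y s * x1 s"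
definition "dd s = x s * x1 s + y s * y1 s"

lemma sm_diff: assumes "smooth_on1 I f" "s \<in> I"
  shows "(f has_real_derivative deriv f s) (at s)"
    "(deriv f has_real_derivative deriv (deriv f) s) (at s)"
    "(deriv (deriv f) has_real_derivative deriv (deriv (deriv f)) s) (at s)"
proof -
  have "\<And>n. ((deriv ^^ n) f) differentiable (at s)" using assms unfolding smooth_on1_def by blast
  from this[of 0] this[of 1] this[of 2] show
    "(f has_real_derivative deriv f s) (at s)"
    "(deriv f has_real_derivative deriv (deriv f) s) (at s)"
    "(deriv (deriv f) has_real_derivative deriv (deriv (deriv f)) s) (at s)"
    by (simp_all add: DERIV_deriv_iff_real_differentiable numeral_2_eq_2)
qed

lemma dx: "s \<in> I \<Longrightarrow> (x has_real_derivative x1 s) (at s)"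
  and dx1: "s \<in> I \<Longrightarrow> (x1 has_real_derivative x2 s) (at s)"
  and dx2: "s \<in> I \<Longrightarrow> (x2 has_real_derivative x3 s) (at s)"
  and dy: "s \<in> I \<Longrightarrow> (y has_real_derivative y1 s) (at s)"
  and dy1: "s \<in> I \<Longrightarrow> (y1 has_real_derivative y2 s) (at s)"
  and dy2: "s \<in> I \<Longrightarrow> (y2 has_real_derivative y3 s) (at s)"
  using sm_diff[OF sx] sm_diff[OF sy] unfolding x1_def x2_def x3_def y1_def y2_def y3_def by auto

lemma unit: "s \<in> I \<Longrightarrow> (x1 s)\<^sup>2 + (y1 s)\<^sup>2 = 1" using unit0 by (simp add: x1_def y1_def)
lemma rho_pos: "s \<in> I \<Longrightarrow> rho s > 0" using pos0 by (simp add: rho_def)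
lemma r_pos: "s \<in> I \<Longrightarrow> r s > 0" using rho_pos by (simp add: r_def)
lemma rr: "s \<in> I \<Longrightarrow> r s * r s = rho s" using rho_pos[of s] by (simp add: r_def)
lemma rr2: "s \<in> I \<Longrightarrow> (r s)\<^sup>2 = (x s)\<^sup>2 + (y s)\<^sup>2" using rr by (simp add: power2_eq_square rho_def)

lemma dr: assumes "s \<in> I" shows "(r has_real_derivative dd s / r s) (at s)"
proof -
  have H: "((\<lambda>u. sqrt ((x u)\<^sup>2 + (y u)\<^sup>2)) has_real_derivative
     (inverse (sqrt ((x s)\<^sup>2 + (y s)\<^sup>2)) / 2 * (2 * x s * x1 s + 2 * y s * y1 s))) (at s)"
    using assms rho_pos[OF assms]
    by (auto intro!: derivative_eq_intros dx dy simp: rho_def)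
  have e: "inverse (sqrt ((x s)\<^sup>2 + (y s)\<^sup>2)) / 2 * (2 * x s * x1 s + 2 * y s * y1 s) = dd s / r s"
    using rho_pos[OF assms] by (simp add: rho_def r_def dd_def divide_simps)
  have f: "r = (\<lambda>u. sqrt ((x u)\<^sup>2 + (y u)\<^sup>2))" by (rule ext) (simp add: r_def rho_def)
  show ?thesis using H unfolding e f .
qed

lemma x1x2: assumes "s \<in> I" shows "x1 s * x2 s + y1 s * y2 s = 0"
proof -
  have "((\<lambda>u. (x1 u)\<^sup>2 + (y1 u)\<^sup>2) has_real_derivative 2 * x1 s * x2 s + 2 * y1 s * y2 s) (at s)"
    using assms by (auto intro!: derivative_eq_intros dx1 dy1)
  from deriv_const_open[OF oI assms _ this, of 1] unit show ?thesis by auto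
qed


definition "E1 s t = (vector [- x s * sin t / r s, x s * cos t / r s, - y s * sin t / r s, y s * cos t / r s] :: real^4)"
definition "E2 s t = (vector [x1 s * cos t, x1 s * sin t, y1 s * cos t, y1 s * sin t] :: real^4)"

lemma ptX: "pt (rot_surface x y) s t = vector [- x s * sin t, x s * cos t, - y s * sin t, y s * cos t]"
  by (rule pt_eqI[where h="\<lambda>v. vector [x s * cos v, x s * sin v, y s * cos v, y s * sin v]"])
     (auto simp: rot_surface_def intro!: vd4 derivative_eq_intros)

lemma psX: "s \<in> I \<Longrightarrow> ps (rot_surface x y) s t = E2 s t"
  unfolding E2_def
  by (rule ps_eqI[OF oI, where h="\<lambda>u. vector [x u * cos t, x u * sin t, y u * cos t, y u * sin t]"])
     (auto simp: rot_surface_def intro!: vd4 derivative_eq_intros dx dy)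

lemma fE1: "frameE x y 1 s t = E1 s t"
  by (simp add: frameE_def frameD_def ptX E1_def v4_ops r_def rho_def)

lemma fE1': "frameE x y (Suc 0) s t = E1 s t" using fE1 by simp

lemma fE2: "s \<in> I \<Longrightarrow> frameE x y 2 s t = E2 s t"
  by (simp add: frameE_def frameD_def psX)

lemma D11: assumes "s \<in> I" shows
  "frameD x y 1 (frameE x y 1) s t = vector [- x s * cos t / rho s, - x s * sin t / rho s, - y s * cos t / rho s, - y s * sin t / rho s]"
proof -
  have "pt (frameE x y 1) s t = vector [- x s * cos t / r s, - x s * sin t / r s, - y s * cos t / r s, - y s * sin t / r s]"
    by (rule pt_eqI[where h="\<lambda>v. vector [- x s * sin v / r s, x s * cos v / r s, - y s * sin v / r s, y s * cos v / r s]"])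
       (use r_pos[OF assms] in \<open>auto simp: fE1' E1_def intro!: vd4 derivative_eq_intros\<close>)
  then show ?thesis using rr[OF assms] r_pos[OF assms]
    by (simp add: frameD_def v4_ops flip: r_def rho_def)
qed

lemma D12: assumes "s \<in> I" shows
  "frameD x y 1 (frameE x y 2) s t = vector [- x1 s * sin t / r s, x1 s * cos t / r s, - y1 s * sin t / r s, y1 s * cos t / r s]"
proof -
  have "pt (frameE x y 2) s t = vector [- x1 s * sin t, x1 s * cos t, - y1 s * sin t, y1 s * cos t]"
    by (rule pt_eqI[where h="\<lambda>v. vector [x1 s * cos v, x1 s * sin v, y1 s * cos v, y1 s * sin v]"])
       (auto simp: fE2 assms E2_def intro!: vd4 derivative_eq_intros)
  then show ?thesis 
    by (simp add: frameD_def v4_ops flip: r_def rho_def)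
qed

lemma D22: assumes "s \<in> I" shows
  "frameD x y 2 (frameE x y 2) s t = vector [x2 s * cos t, x2 s * sin t, y2 s * cos t, y2 s * sin t]"
  unfolding frameD_def using assms
  by (auto intro!: ps_eqI[OF oI, where h="\<lambda>u. E2 u t"] simp: fE2 E2_def intro!: vd4 derivative_eq_intros dx1 dy1)

lemma D11': "s \<in> I \<Longrightarrow> frameD x y (Suc 0) (frameE x y (Suc 0)) s t = vector [- x s * cos t / rho s, - x s * sin t / rho s, - y s * cos t / rho s, - y s * sin t / rho s]"
  using D11 by simp
lemma D12': "s \<in> I \<Longrightarrow> frameD x y (Suc 0) (frameE x y 2) s t = vector [- x1 s * sin t / r s, x1 s * cos t / r s, - y1 s * sin t / r s, y1 s * cos t / r s]"
  using D12 by simp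

definition "qq s = x1 s - x s * dd s / rho s"
definition "pp s = y1 s - y s * dd s / rho s"

lemma D21: assumes "s \<in> I" shows
  "frameD x y 2 (frameE x y 1) s t = vector [- qq s * sin t / r s, qq s * cos t / r s, - pp s * sin t / r s, pp s * cos t / r s]"
  unfolding frameD_def using assms
  apply simp
  apply (rule ps_eqI[OF oI, where h="\<lambda>u. E1 u t"])
  using assms r_pos apply (auto simp: fE1' E1_def intro!: vd4 derivative_eq_intros dx dy dr)
  using r_pos[OF assms]
  apply (simp_all add: qq_def pp_def rr[OF assms, symmetric])
  apply (simp_all add: field_simps less_imp_neq[OF r_pos[OF assms], symmetric])
  done


lemma D21': "s \<in> I \<Longrightarrow> frameD x y 2 (frameE x y (Suc 0)) s t = vector [- qq s * sin t / r s, qq s * cos t / r s, - pp s * sin t / r s, pp s * cos t / r s]"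
  using D21 by simp

lemma sc: "(sin (t::real))\<^sup>2 = 1 - (cos t)\<^sup>2" using sin_cos_squared_add[of t] by linarith

lemma ip11: assumes "s \<in> I" shows
  "frameD x y 1 (frameE x y 1) s t \<bullet> E1 s t = 0"
  "frameD x y 1 (frameE x y 1) s t \<bullet> E2 s t = - dd s / rho s"
  using rho_pos[OF assms] sin_cos_squared_add[of t] r_pos[OF assms]
  apply (simp_all add: D11' assms E1_def E2_def v4_ops dd_def field_simps)
  using sin_cos_squared_add[of t] apply algebra
  done


lemma ip12: assumes "s \<in> I" shows
  "frameD x y 1 (frameE x y 2) s t \<bullet> E1 s t = dd s / rho s"
  "frameD x y 1 (frameE x y 2) s t \<bullet> E2 s t = 0"
  using rho_pos[OF assms] r_pos[OF assms]
  apply (simp_all add: D12' assms E1_def E2_def v4_ops dd_def field_simps rr[OF assms, symmetric])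
  using sin_cos_squared_add[of t] apply algebra
  done

lemma ip22: assumes "s \<in> I" shows
  "frameD x y 2 (frameE x y 2) s t \<bullet> E1 s t = 0"
  "frameD x y 2 (frameE x y 2) s t \<bullet> E2 s t = 0"
  using rho_pos[OF assms] r_pos[OF assms] x1x2[OF assms]
  apply (simp_all add: D22 assms E1_def E2_def v4_ops dd_def field_simps)
  using sin_cos_squared_add[of t] x1x2[OF assms] apply algebra
  done

lemma ip21: assumes "s \<in> I" shows
  "frameD x y 2 (frameE x y 1) s t \<bullet> E1 s t = 0"
  "frameD x y 2 (frameE x y 1) s t \<bullet> E2 s t = 0"
  using rho_pos[OF assms] r_pos[OF assms]
  apply (simp_all add: D21' assms E1_def E2_def v4_ops dd_def qq_def pp_def field_simps)
  using sin_cos_squared_add[of t] rr[OF assms] rho_def[of s] apply algebra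
  done

lemma sum12: "(\<Sum>k\<in>{1,2::nat}. f k) = f 1 + (f 2 :: 'a::comm_monoid_add)" by simp


lemma sff11: assumes "s \<in> I" shows "sff x y 1 1 s t = vector [(dd s * x1 s - x s) * cos t / rho s, (dd s * x1 s - x s) * sin t / rho s,
   (dd s * y1 s - y s) * cos t / rho s, (dd s * y1 s - y s) * sin t / rho s]"
  unfolding sff_def sum12
  apply (simp only: fE1 fE2 assms)
  apply (simp only: ip11 assms)
  using rho_pos[OF assms] apply (simp add: D11' assms E1_def E2_def v4_ops v4_eq field_simps)
  done

lemma sff12: assumes "s \<in> I" shows "sff x y 1 2 s t = vector [- qq s * sin t / r s, qq s * cos t / r s, - pp s * sin t / r s, pp s * cos t / r s]"
  unfolding sff_def sum12
  apply (simp only: fE1 fE2 assms)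
  apply (simp only: ip12 assms)
  using rho_pos[OF assms] r_pos[OF assms] apply (simp add: D12' assms E1_def E2_def v4_ops v4_eq field_simps qq_def pp_def)
  done

lemma sff21: assumes "s \<in> I" shows "sff x y 2 1 s t = vector [- qq s * sin t / r s, qq s * cos t / r s, - pp s * sin t / r s, pp s * cos t / r s]"
  unfolding sff_def sum12
  apply (simp only: fE1 fE2 assms)
  apply (simp only: ip21 assms)
  apply (simp add: D21' assms v4_ops)
  done

lemma sff22: assumes "s \<in> I" shows "sff x y 2 2 s t = vector [x2 s * cos t, x2 s * sin t, y2 s * cos t, y2 s * sin t]"
  unfolding sff_def sum12
  apply (simp only: fE1 fE2 assms)
  apply (simp only: ip22 assms)
  apply (simp add: D22 assms v4_ops)
  done


lemma K_formula: assumes "s \<in> I" shows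
  "gauss_curvature x y s t * (rho s)\<^sup>2 = - (x s * x2 s + y s * y2 s) * rho s - (W s)\<^sup>2"
proof -
  have q: "qq s * rho s = x1 s * rho s - x s * dd s" "pp s * rho s = y1 s * rho s - y s * dd s"
    using rho_pos[OF assms] by (simp_all add: qq_def pp_def field_simps)
  show ?thesis
    unfolding gauss_curvature_def
    apply (simp only: sff11 sff12 sff22 assms)
    using rho_pos[OF assms] r_pos[OF assms] apply (simp add: v4_ops field_simps)
    using sin_cos_squared_add[of t] rr[OF assms] rho_def[of s] q x1x2[OF assms] unit[OF assms]
    unfolding W_def dd_def
    apply algebra
    done
qed


lemma d_dd: assumes "s \<in> I" shows "(dd has_real_derivative x1 s * x1 s + x s * x2 s + (y1 s * y1 s + y s * y2 s)) (at s)"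
  unfolding dd_def[abs_def] using assms by (auto intro!: derivative_eq_intros dx dy dx1 dy1)

lemma d_W: assumes "s \<in> I" shows "(W has_real_derivative x s * y2 s - y s * x2 s) (at s)"
  unfolding W_def[abs_def] using assms by (auto intro!: derivative_eq_intros dx dy dx1 dy1)

lemma lagrange: assumes "s \<in> I" shows "rho s = (dd s)\<^sup>2 + (W s)\<^sup>2"
  using unit[OF assms] unfolding rho_def dd_def W_def by algebra

lemma kappa: assumes "s \<in> I" shows "x2 s = - (x1 s * y2 s - y1 s * x2 s) * y1 s" "y2 s = (x1 s * y2 s - y1 s * x2 s) * x1 s"
  using unit[OF assms] x1x2[OF assms] by algebra+

end

locale flat = rs +
  assumes flat0: "\<forall>s\<in>I. \<forall>t. gauss_curvature x y s t = 0"
begin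

lemma flat_eq: assumes "s \<in> I" shows "(x s * x2 s + y s * y2 s) * rho s = - (W s)\<^sup>2"
  using K_formula[OF assms, of 0] flat0 assms by (auto simp: algebra_simps)

lemma a_ex: "\<exists>a. \<forall>s\<in>I. dd s / r s = a"
proof (rule const_on_interval[OF iI oI])
  fix s assume s: "s \<in> I"
  have D: "((\<lambda>s. dd s / r s) has_real_derivative
     ((x1 s * x1 s + x s * x2 s + (y1 s * y1 s + y s * y2 s)) * r s - dd s * (dd s / r s)) / (r s * r s)) (at s)"
    using s r_pos[OF s] by (auto intro!: derivative_eq_intros d_dd dr)
  have "(x1 s * x1 s + x s * x2 s + (y1 s * y1 s + y s * y2 s)) * r s * r s - dd s * dd s = 0"
    using unit[OF s] flat_eq[OF s] lagrange[OF s] rr[OF s] by algebra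
  then have "(x1 s * x1 s + x s * x2 s + (y1 s * y1 s + y s * y2 s)) * r s - dd s * (dd s / r s) = 0"
    using r_pos[OF s] by (simp add: field_simps)
  with D show "((\<lambda>s. dd s / r s) has_real_derivative 0) (at s)" by simp
qed


definition "aa = (SOME a. \<forall>s\<in>I. dd s / r s = a)"
lemma aa: "s \<in> I \<Longrightarrow> dd s / r s = aa"
  using someI_ex[OF a_ex] unfolding aa_def by blast
lemma dd_aa: "s \<in> I \<Longrightarrow> dd s = aa * r s"
  using aa[of s] r_pos[of s] by (simp add: field_simps)

lemma W2: assumes "s \<in> I" shows "(W s)\<^sup>2 = rho s * (1 - aa\<^sup>2)"
  using lagrange[OF assms] dd_aa[OF assms] rr[OF assms] by algebra

lemma FS: assumes s: "s \<in> I" shows "x2 s = - (W s / rho s) * y1 s \<and> y2 s = (W s / rho s) * x1 s"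
proof (cases "aa\<^sup>2 = 1")
  case True
  have W0: "\<And>u. u \<in> I \<Longrightarrow> W u = 0" using W2 True by simp
  have "x s * y2 s - y s * x2 s = 0" by (rule deriv_const_open[OF oI s W0 d_W[OF s]])
  then have "(x1 s * y2 s - y1 s * x2 s) * dd s = 0"
    using kappa[OF s] unfolding dd_def by algebra
  moreover have "dd s \<noteq> 0" using dd_aa[OF s] r_pos[OF s] True by auto
  ultimately have k: "x1 s * y2 s - y1 s * x2 s = 0" by simp
  show ?thesis using kappa[OF s] W0[OF s] unfolding k by simp
next
  case False
  have "(W s)\<^sup>2 \<noteq> 0" using W2[OF s] rho_pos[OF s] False by simp
  then have Wn: "W s \<noteq> 0" by simp
  have "(x1 s * y2 s - y1 s * x2 s) * W s * rho s = (W s)\<^sup>2"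
    using kappa[OF s] flat_eq[OF s] unfolding W_def by algebra
  then have "W s * ((x1 s * y2 s - y1 s * x2 s) * rho s - W s) = 0" by algebra
  then have "(x1 s * y2 s - y1 s * x2 s) * rho s = W s" using Wn by simp
  then have "(x1 s * y2 s - y1 s * x2 s) = W s / rho s"
    using rho_pos[OF s] by (simp add: field_simps)
  then show ?thesis using kappa[OF s] by simp
qed

lemma b_ex: "\<exists>b. \<forall>s\<in>I. W s / r s = b"
proof (rule const_on_interval[OF iI oI])
  fix s assume s: "s \<in> I"
  have D: "((\<lambda>s. W s / r s) has_real_derivative
     ((x s * y2 s - y s * x2 s) * r s - W s * (dd s / r s)) / (r s * r s)) (at s)"
    using s r_pos[OF s] by (auto intro!: derivative_eq_intros d_W dr)
  have "x s * y2 s - y s * x2 s = W s / rho s * dd s"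
    using FS[OF s] unfolding dd_def by (simp add: algebra_simps)
  then have "(x s * y2 s - y s * x2 s) * r s * r s - W s * dd s = 0"
    using rr[OF s] rho_pos[OF s] by (simp add: field_simps)
  then have "(x s * y2 s - y s * x2 s) * r s - W s * (dd s / r s) = 0"
    using r_pos[OF s] by (simp add: field_simps)
  with D show "((\<lambda>s. W s / r s) has_real_derivative 0) (at s)" by simp
qed

definition "bb = (SOME b. \<forall>s\<in>I. W s / r s = b)"
lemma bb: "s \<in> I \<Longrightarrow> W s / r s = bb"
  using someI_ex[OF b_ex] unfolding bb_def by blast
lemma W_bb: "s \<in> I \<Longrightarrow> W s = bb * r s"
  using bb[of s] r_pos[of s] by (simp add: field_simps)

definition "om s = bb / r s"
lemma om: "s \<in> I \<Longrightarrow> W s / rho s = om s"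
proof -
  assume s: "s \<in> I"
  have "W s / rho s = bb * r s / (r s * r s)" using W_bb[OF s] rr[OF s] by simp
  then show ?thesis using r_pos[OF s] by (simp add: om_def)
qed

lemma FS': "s \<in> I \<Longrightarrow> x2 s = - om s * y1 s" "s \<in> I \<Longrightarrow> y2 s = om s * x1 s"
  using FS om by auto


definition "PP s = (x s * x1 s - y s * y1 s) / r s"
definition "QQ s = (x s * y1 s + y s * x1 s) / r s"

lemma omrho: "s \<in> I \<Longrightarrow> om s * rho s = W s"
  using om[of s] rho_pos[of s] by (simp add: field_simps)

lemma dP: assumes s: "s \<in> I" shows "(PP has_real_derivative - 2 * om s * QQ s) (at s)"
proof -
  have D: "(PP has_real_derivative
     ((x1 s * x1 s + x s * x2 s - (y1 s * y1 s + y s * y2 s)) * r s - (x s * x1 s - y s * y1 s) * (dd s / r s)) / (r s * r s)) (at s)"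
    unfolding PP_def[abs_def] using s r_pos[OF s] by (auto intro!: derivative_eq_intros dx dy dx1 dy1 dr)
  have "((x1 s * x1 s + x s * x2 s - (y1 s * y1 s + y s * y2 s)) * r s - (x s * x1 s - y s * y1 s) * (dd s / r s)) / (r s * r s)
     = - 2 * om s * QQ s"
    using r_pos[OF s] apply (simp add: FS'[OF s] QQ_def field_simps)
    using omrho[OF s] rr[OF s] rho_def[of s] unfolding W_def dd_def by algebra
  with D show ?thesis by simp
qed

lemma dQ: assumes s: "s \<in> I" shows "(QQ has_real_derivative 2 * om s * PP s) (at s)"
proof -
  have D: "(QQ has_real_derivative
     ((x1 s * y1 s + x s * y2 s + (y1 s * x1 s + y s * x2 s)) * r s - (x s * y1 s + y s * x1 s) * (dd s / r s)) / (r s * r s)) (at s)"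
    unfolding QQ_def[abs_def] using s r_pos[OF s] by (auto intro!: derivative_eq_intros dx dy dx1 dy1 dr)
  have "((x1 s * y1 s + x s * y2 s + (y1 s * x1 s + y s * x2 s)) * r s - (x s * y1 s + y s * x1 s) * (dd s / r s)) / (r s * r s)
     = 2 * om s * PP s"
    using r_pos[OF s] apply (simp add: FS'[OF s] PP_def field_simps)
    using omrho[OF s] rr[OF s] rho_def[of s] unfolding W_def dd_def by algebra
  with D show ?thesis by simp
qed

lemma dom: assumes s: "s \<in> I" shows "(om has_real_derivative - om s * aa / r s) (at s)"
proof -
  have D: "(om has_real_derivative - (bb * (dd s / r s) / (r s * r s))) (at s)"
    unfolding om_def[abs_def] using s r_pos[OF s] by (auto intro!: derivative_eq_intros dr)
  then show ?thesis using aa[OF s] by (simp add: om_def field_simps)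
qed


definition "Gf s t = (vector [- (aa + PP s) / 2, - bb * (sin t * cos t),
   (bb * ((cos t)\<^sup>2 - (sin t)\<^sup>2) - QQ s) / 2, (QQ s + bb * ((cos t)\<^sup>2 - (sin t)\<^sup>2)) / 2,
   bb * (sin t * cos t), (PP s - aa) / 2] :: real^6)"

lemma Gmap: assumes s: "s \<in> I" shows "gauss_map x y s t = Gf s t"
  unfolding gauss_map_def fE1 fE2[OF s] E1_def E2_def wedge4_def Gf_def
  using r_pos[OF s] apply (simp add: v6_eq PP_def QQ_def field_simps)
  using rr[OF s] rho_def[of s] W_bb[OF s] dd_aa[OF s] sin_cos_squared_add[of t] unfolding W_def dd_def
  apply (intro conjI)
  apply algebra+
  done


definition "Gt s t = (vector [0, - bb * ((cos t)\<^sup>2 - (sin t)\<^sup>2), -2 * bb * (sin t * cos t), -2 * bb * (sin t * cos t),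
   bb * ((cos t)\<^sup>2 - (sin t)\<^sup>2), 0] :: real^6)"
definition "Gtt s t = (vector [0, 4 * bb * (sin t * cos t), -2 * bb * ((cos t)\<^sup>2 - (sin t)\<^sup>2), -2 * bb * ((cos t)\<^sup>2 - (sin t)\<^sup>2),
   -4 * bb * (sin t * cos t), 0] :: real^6)"
definition "Gs s t = (vector [om s * QQ s, 0, - om s * PP s, om s * PP s, 0, - om s * QQ s] :: real^6)"
definition "Gss s t = (vector [- om s * aa * QQ s / r s + 2 * (om s)\<^sup>2 * PP s, 0,
   om s * aa * PP s / r s + 2 * (om s)\<^sup>2 * QQ s, - (om s * aa * PP s / r s + 2 * (om s)\<^sup>2 * QQ s), 0,
   om s * aa * QQ s / r s - 2 * (om s)\<^sup>2 * PP s] :: real^6)"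

lemma ptG: assumes s: "s \<in> I" shows "pt (gauss_map x y) s t = Gt s t"
  apply (rule pt_eqI[where h="\<lambda>v. Gf s v"])
  apply (simp add: Gmap[OF s])
  unfolding Gf_def Gt_def
  apply (rule vd6)
  apply (auto intro!: derivative_eq_intros simp: power2_eq_square algebra_simps)
  done


lemma psG: assumes s: "s \<in> I" shows "ps (gauss_map x y) s t = Gs s t"
  apply (rule ps_eqI[OF oI s, where h="\<lambda>u. Gf u t"])
  apply (simp add: Gmap)
  unfolding Gf_def Gs_def
  apply (rule vd6)
  apply (auto intro!: derivative_eq_intros dP[OF s] dQ[OF s] simp: algebra_simps)
  done

lemma pspsG: assumes s: "s \<in> I" shows "ps (ps (gauss_map x y)) s t = Gss s t"
  apply (rule ps_eqI[OF oI s, where h="\<lambda>u. Gs u t"])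
  apply (simp add: psG)
  unfolding Gs_def Gss_def
  apply (rule vd6)
  using r_pos[OF s] apply (auto intro!: derivative_eq_intros dP[OF s] dQ[OF s] dom[OF s] simp: algebra_simps power2_eq_square)
  done

lemma fd1G: assumes s: "s \<in> I" shows "frameD x y 1 (gauss_map x y) s t = (1 / r s) *\<^sub>R Gt s t"
  by (simp add: frameD_def ptG[OF s] r_def rho_def)

lemma fd1G': assumes s: "s \<in> I" shows "frameD x y (Suc 0) (gauss_map x y) s t = (1 / r s) *\<^sub>R Gt s t"
  using fd1G[OF s] by simp

lemma ptfd1G: assumes s: "s \<in> I" shows "pt (frameD x y 1 (gauss_map x y)) s t = (1 / r s) *\<^sub>R Gtt s t"
  apply (rule pt_eqI[where h="\<lambda>v. (1 / r s) *\<^sub>R Gt s v"])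
  apply (simp add: fd1G'[OF s])
  unfolding Gt_def Gtt_def v6_ops
  apply (rule vd6)
  using r_pos[OF s] apply (auto intro!: derivative_eq_intros simp: power2_eq_square field_simps)
  done


lemma fd2: "frameD x y 2 F = ps F"
  by (rule ext, rule ext) (simp add: frameD_def)

lemma fd1: "frameD x y 1 F s t = (1 / r s) *\<^sub>R pt F s t"
  by (simp add: frameD_def r_def rho_def)

lemma Lap: assumes s: "s \<in> I" shows "laplacian x y (gauss_map x y) s t =
  vector [- 2 * (om s)\<^sup>2 * PP s, - 4 * bb * (sin t * cos t) / rho s,
     2 * bb * ((cos t)\<^sup>2 - (sin t)\<^sup>2) / rho s - 2 * (om s)\<^sup>2 * QQ s,
     2 * bb * ((cos t)\<^sup>2 - (sin t)\<^sup>2) / rho s + 2 * (om s)\<^sup>2 * QQ s,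
     4 * bb * (sin t * cos t) / rho s, 2 * (om s)\<^sup>2 * PP s]"
proof -
  have A: "frameD x y 1 (frameD x y 1 (gauss_map x y)) s t = (1 / r s) *\<^sub>R ((1 / r s) *\<^sub>R Gtt s t)"
    by (subst fd1) (simp only: ptfd1G[OF s])
  have B: "frameD x y 2 (frameD x y 2 (gauss_map x y)) s t = Gss s t"
    by (simp add: fd2 pspsG[OF s])
  have C: "frameD x y 2 (gauss_map x y) s t = Gs s t"
    by (simp add: fd2 psG[OF s])
  show ?thesis
    unfolding laplacian_def sum12
    apply (simp only: fE1 fE2[OF s])
    apply (simp only: ip11[OF s] ip22[OF s] A B C)
    unfolding Gtt_def Gss_def Gs_def v6_ops
    using r_pos[OF s] dd_aa[OF s]
    apply (simp add: v6_ops)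
    apply (simp add: v6_eq field_simps power2_eq_square rr[OF s, symmetric])
    done
qed


lemma bb2: assumes s: "s \<in> I" shows "bb\<^sup>2 = 1 - aa\<^sup>2"
proof -
  have "(bb * r s)\<^sup>2 = r s * r s * (1 - aa\<^sup>2)" using W2[OF s] W_bb[OF s] rr[OF s] by simp
  then have "r s * r s * bb\<^sup>2 = r s * r s * (1 - aa\<^sup>2)" by (simp add: power2_eq_square algebra_simps)
  then show ?thesis using r_pos[OF s] by simp
qed

lemma PQ: assumes s: "s \<in> I" shows "(PP s)\<^sup>2 + (QQ s)\<^sup>2 = 1"
proof -
  have H1: "(x s * x1 s - y s * y1 s)\<^sup>2 + (x s * y1 s + y s * x1 s)\<^sup>2 = r s * r s"
    using unit[OF s] rr[OF s] rho_def[of s] by algebra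
  have H2: "(PP s)\<^sup>2 + (QQ s)\<^sup>2 = ((x s * x1 s - y s * y1 s)\<^sup>2 + (x s * y1 s + y s * x1 s)\<^sup>2) / (r s)\<^sup>2"
    unfolding PP_def QQ_def power_divide by (simp only: add_divide_distrib)
  show ?thesis unfolding H2 H1 using r_pos[OF s] by (simp add: power2_eq_square)
qed

lemma om2: assumes s: "s \<in> I" shows "(om s)\<^sup>2 * rho s = bb\<^sup>2"
  unfolding om_def rr[OF s, symmetric] using r_pos[OF s] by (simp add: power2_eq_square field_simps)

lemma cone_not_1type:
  assumes a0: "aa \<noteq> 0" and b0: "bb \<noteq> 0" and s0: "s0 \<in> I"
    and eq: "\<forall>s\<in>I. \<forall>t. laplacian x y (gauss_map x y) s t = f s t *\<^sub>R (gauss_map x y s t + C)"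
  shows False
proof -
  have c1: "PP s = (2 * C$1 - aa) / aa\<^sup>2" if s: "s \<in> I" for s
  proof -
    have e0: "laplacian x y (gauss_map x y) s 0 = f s 0 *\<^sub>R (gauss_map x y s 0 + C)" using eq s by auto
    have e1: "laplacian x y (gauss_map x y) s (pi/4) = f s (pi/4) *\<^sub>R (gauss_map x y s (pi/4) + C)" using eq s by auto
    have sc4: "sin (pi/4) * cos (pi/4) = 1/2" "(cos (pi/4))\<^sup>2 - (sin (pi/4))\<^sup>2 = 0"
      by (simp_all add: sin_45 cos_45 power2_eq_square)
    have e0c: "\<And>k. (laplacian x y (gauss_map x y) s 0)$k = (f s 0 *\<^sub>R (gauss_map x y s 0 + C))$k"
      using e0 by simp
    have e0': "0 = f s 0 * C$2" "2 * bb / rho s - 2 * (om s)\<^sup>2 * QQ s + (2 * bb / rho s + 2 * (om s)\<^sup>2 * QQ s)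
       = f s 0 * ((bb - QQ s) / 2 + C$3) + f s 0 * ((QQ s + bb) / 2 + C$4)"
      using e0c[of 2] e0c[of 3] e0c[of 4] unfolding Lap[OF s] Gmap[OF s] Gf_def by simp_all
    have "2 * bb / rho s - 2 * (om s)\<^sup>2 * QQ s + (2 * bb / rho s + 2 * (om s)\<^sup>2 * QQ s) \<noteq> 0"
      using b0 rho_pos[OF s] by simp
    then have "f s 0 \<noteq> 0" using e0'(2) by auto
    then have C2: "C$2 = 0" using e0'(1) by simp
    have e1c: "\<And>k. (laplacian x y (gauss_map x y) s (pi/4))$k = (f s (pi/4) *\<^sub>R (gauss_map x y s (pi/4) + C))$k"
      using e1 by simp
    have e1': "- 4 * bb * (1/2) / rho s = f s (pi/4) * (- bb * (1/2) + C$2)"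
       "- 2 * (om s)\<^sup>2 * PP s = f s (pi/4) * (- (aa + PP s) / 2 + C$1)"
      using e1c[of 2] e1c[of 1] unfolding Lap[OF s] Gmap[OF s] Gf_def sc4 by simp_all
    have f1: "f s (pi/4) = 4 / rho s" using e1'(1) C2 b0 rho_pos[OF s] by (simp add: field_simps)
    have "- 2 * (om s)\<^sup>2 * rho s * PP s = 4 * (- (aa + PP s) / 2 + C$1)"
      using e1'(2) rho_pos[OF s] unfolding f1 by (simp add: field_simps)
    then have "- 2 * (1 - aa\<^sup>2) * PP s = 4 * (- (aa + PP s) / 2 + C$1)"
      using om2[OF s] bb2[OF s] by (metis mult.commute mult.left_commute)
    then have "aa\<^sup>2 * PP s = 2 * C$1 - aa" by algebra
    then show ?thesis using a0 by (simp add: field_simps)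
  qed
  have Q0: "QQ s = 0" if s: "s \<in> I" for s
  proof -
    have "- 2 * om s * QQ s = 0" by (rule deriv_const_open[OF oI s c1 dP[OF s]])
    moreover have "om s \<noteq> 0" using b0 r_pos[OF s] by (simp add: om_def)
    ultimately show ?thesis by simp
  qed
  have "2 * om s0 * PP s0 = 0" by (rule deriv_const_open[OF oI s0 Q0 dQ[OF s0]])
  moreover have "om s0 \<noteq> 0" using b0 r_pos[OF s0] by (simp add: om_def)
  ultimately have "PP s0 = 0" by simp
  with PQ[OF s0] Q0[OF s0] show False by simp
qed


lemma sff11': "s \<in> I \<Longrightarrow> sff x y (Suc 0) (Suc 0) s t = vector [(dd s * x1 s - x s) * cos t / rho s, (dd s * x1 s - x s) * sin t / rho s,
   (dd s * y1 s - y s) * cos t / rho s, (dd s * y1 s - y s) * sin t / rho s]" using sff11 by simp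
lemma sff12': "s \<in> I \<Longrightarrow> sff x y (Suc 0) 2 s t = vector [- qq s * sin t / r s, qq s * cos t / r s, - pp s * sin t / r s, pp s * cos t / r s]"
  using sff12 by simp
lemma sff21': "s \<in> I \<Longrightarrow> sff x y 2 (Suc 0) s t = vector [- qq s * sin t / r s, qq s * cos t / r s, - pp s * sin t / r s, pp s * cos t / r s]"
  using sff21 by simp

lemma qq_W: "s \<in> I \<Longrightarrow> qq s * rho s = - y s * W s" "s \<in> I \<Longrightarrow> pp s * rho s = x s * W s"
proof -
  assume s: "s \<in> I"
  have "qq s * rho s = x1 s * rho s - x s * dd s" "pp s * rho s = y1 s * rho s - y s * dd s"
    using rho_pos[OF s] by (simp_all add: qq_def pp_def field_simps)
  then show "qq s * rho s = - y s * W s" "pp s * rho s = x s * W s"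
    unfolding rho_def dd_def W_def by algebra+
qed

lemma tg_b0: assumes "bb = 0" shows "totally_geodesic x y I"
  unfolding totally_geodesic_def
proof (intro ballI allI)
  fix s t i j assume s: "s \<in> I" and i: "i \<in> {1,2::nat}" and j: "j \<in> {1,2::nat}"
  have W0: "W s = 0" using W_bb[OF s] assms by simp
  have om0: "om s = 0" using assms by (simp add: om_def)
  have x2: "x2 s = 0" "y2 s = 0" using FS'[OF s] om0 by auto
  have q0: "qq s = 0" "pp s = 0" using qq_W[OF s] W0 rho_pos[OF s] by auto
  have e1: "dd s * x1 s - x s = 0" "dd s * y1 s - y s = 0"
    using W0 unit[OF s] unfolding W_def dd_def by algebra+
  show "sff x y i j s t = 0"
    using i j by (auto simp: sff11'[OF s] sff12'[OF s] sff21'[OF s] sff22[OF s] x2 q0 e1 v4_ops)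
qed

lemma b0_tg: assumes "totally_geodesic x y I" "s \<in> I" shows "bb = 0"
proof -
  have "sff x y 1 2 s 0 = 0" using assms unfolding totally_geodesic_def by auto
  then have "qq s = 0" "pp s = 0" using r_pos[OF assms(2)] by (simp_all add: sff12'[OF assms(2)] v4_ops v4_eq)
  then have "y s * W s = 0" "x s * W s = 0" using qq_W[OF assms(2)] by auto
  then have "W s = 0" using rho_pos[OF assms(2)] unfolding rho_def
    by (metis mult_eq_0_iff power2_eq_square add.right_neutral less_irrefl)
  then show ?thesis using bb[OF assms(2)] by simp
qed

end

lemma foldr_pd_const: "foldr pd ds (\<lambda>s t. k) = (\<lambda>s t. if ds = [] then k else 0)"
proof (induction ds)
  case Nil
  then show ?case by simp
next
  case (Cons b ds)
  show ?case by (simp only: foldr.simps o_apply Cons.IH) (simp add: pd_def ps_def pt_def fun_eq_iff)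
qed

lemma smooth_const: "smooth_on2 U (\<lambda>s t. k)"
  unfolding smooth_on2_def Let_def foldr_pd_const by auto

context flat begin

lemma b0_1type: assumes "bb = 0" shows "pointwise_1type x y I"
  unfolding pointwise_1type_def
proof (intro exI conjI)
  show "smooth_on2 (I \<times> UNIV) (\<lambda>s t. 0)" by (rule smooth_const)
  show "\<forall>s\<in>I. \<forall>t. laplacian x y (gauss_map x y) s t = 0 *\<^sub>R (gauss_map x y s t + 0)"
    using assms by (simp add: Lap om_def v6_ops)
qed


lemma r_const: assumes "aa = 0" shows "\<exists>r0. \<forall>s\<in>I. r s = r0"
  by (rule const_on_interval[OF iI oI]) (use dr aa assms in auto)

lemma a0_1type: assumes a0: "aa = 0" and s0: "s0 \<in> I" shows "pointwise_1type x y I"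
proof -
  obtain r0 where r0: "\<And>s. s \<in> I \<Longrightarrow> r s = r0" using r_const[OF a0] by auto
  have r0p: "r0 > 0" using r_pos[OF s0] r0[OF s0] by simp
  have b2: "bb\<^sup>2 = 1" using bb2[OF s0] a0 by simp
  show ?thesis unfolding pointwise_1type_def
  proof (intro exI conjI)
    show "smooth_on2 (I \<times> UNIV) (\<lambda>s t. 4 / r0\<^sup>2)" by (rule smooth_const)
    show "\<forall>s\<in>I. \<forall>t. laplacian x y (gauss_map x y) s t = (4 / r0\<^sup>2) *\<^sub>R (gauss_map x y s t + 0)"
    proof (intro ballI allI)
      fix s t assume s: "s \<in> I"
      have rho: "rho s = r0 * r0" using rr[OF s] r0[OF s] by simp
      show "laplacian x y (gauss_map x y) s t = (4 / r0\<^sup>2) *\<^sub>R (gauss_map x y s t + 0)"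
        unfolding Lap[OF s] Gmap[OF s] Gf_def om_def r0[OF s] rho a0
        using r0p b2 by (simp add: v6_ops v6_eq field_simps power2_eq_square)
    qed
  qed
qed

lemma circ_a0: assumes c: "\<forall>s\<in>I. x s = lam * cos (b0 * s + d) \<and> y s = lam * sin (b0 * s + d)" and s: "s \<in> I"
  shows "aa = 0"
proof -
  have "((\<lambda>u. lam * cos (b0 * u + d)) has_real_derivative lam * (- sin (b0 * s + d) * b0)) (at s)"
    by (auto intro!: derivative_eq_intros)
  then have "(x has_real_derivative lam * (- sin (b0 * s + d) * b0)) (at s)"
    by (rule has_field_derivative_transform_within_open[OF _ oI s]) (use c in auto)
  then have X: "x1 s = lam * (- sin (b0 * s + d) * b0)" using dx[OF s] DERIV_unique by blast
  have "((\<lambda>u. lam * sin (b0 * u + d)) has_real_derivative lam * (cos (b0 * s + d) * b0)) (at s)"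
    by (auto intro!: derivative_eq_intros)
  then have "(y has_real_derivative lam * (cos (b0 * s + d) * b0)) (at s)"
    by (rule has_field_derivative_transform_within_open[OF _ oI s]) (use c in auto)
  then have Y: "y1 s = lam * (cos (b0 * s + d) * b0)" using dy[OF s] DERIV_unique by blast
  have "dd s = 0" unfolding dd_def X Y using c s by (simp add: algebra_simps)
  then show ?thesis using aa[OF s] by simp
qed

lemma a0_circ: assumes a0: "aa = 0" and s0: "s0 \<in> I"
  shows "\<exists>b0 lam d. b0\<^sup>2 * lam\<^sup>2 = 1 \<and> (\<forall>s\<in>I. x s = lam * cos (b0 * s + d) \<and> y s = lam * sin (b0 * s + d))"
proof -
  obtain r0 where r0: "\<And>s. s \<in> I \<Longrightarrow> r s = r0" using r_const[OF a0] by auto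
  have r0p: "r0 > 0" using r_pos[OF s0] r0[OF s0] by simp
  have b2: "bb\<^sup>2 = 1" using bb2[OF s0] a0 by simp
  define w where "w = bb / r0"
  have X1: "x1 s = - w * y s" "y1 s = w * x s" if s: "s \<in> I" for s
  proof -
    have i: "x1 s * rho s = x s * dd s - y s * W s" "y1 s * rho s = y s * dd s + x s * W s"
      unfolding rho_def dd_def W_def by algebra+
    have "dd s = 0" using dd_aa[OF s] a0 by simp
    moreover have "W s = bb * r0" using W_bb[OF s] r0[OF s] by simp
    moreover have "rho s = r0 * r0" using rr[OF s] r0[OF s] by simp
    ultimately have e: "x1 s * (r0 * r0) = - y s * (bb * r0)" "y1 s * (r0 * r0) = x s * (bb * r0)" using i by auto
    have nz: "r0 * r0 \<noteq> 0" using r0p by simp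
    have "r0 * (r0 * x1 s + y s * bb) = 0" "r0 * (r0 * y1 s - x s * bb) = 0" using e by algebra+
    then have "r0 * x1 s + y s * bb = 0" "r0 * y1 s - x s * bb = 0" using r0p by simp_all
    then show "x1 s = - w * y s" "y1 s = w * x s" using r0p unfolding w_def by (simp_all add: field_simps)
  qed
  have "(x s0 / r0)\<^sup>2 + (y s0 / r0)\<^sup>2 = 1"
    using rr2[OF s0] r0[OF s0] r0p rho_pos[OF s0] unfolding power_divide add_divide_distrib[symmetric] rho_def by auto
  then obtain phi where phi: "x s0 / r0 = cos phi" "y s0 / r0 = sin phi" by (rule sincos_total_2pi)
  define d where "d = phi - w * s0"
  define g where "g u = (x u - r0 * cos (w * u + d))\<^sup>2 + (y u - r0 * sin (w * u + d))\<^sup>2" for u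
  have "\<exists>c. \<forall>s\<in>I. g s = c"
  proof (rule const_on_interval[OF iI oI])
    fix s assume s: "s \<in> I"
    have "(g has_real_derivative
      2 * (x s - r0 * cos (w * s + d)) * (x1 s - r0 * (- sin (w * s + d) * w)) +
      2 * (y s - r0 * sin (w * s + d)) * (y1 s - r0 * (cos (w * s + d) * w))) (at s)"
      unfolding g_def[abs_def] using s by (auto intro!: derivative_eq_intros dx dy simp: algebra_simps)
    moreover have "2 * (x s - r0 * cos (w * s + d)) * (x1 s - r0 * (- sin (w * s + d) * w)) +
      2 * (y s - r0 * sin (w * s + d)) * (y1 s - r0 * (cos (w * s + d) * w)) = 0"
      unfolding X1[OF s] by algebra
    ultimately show "(g has_real_derivative 0) (at s)" by simp
  qed
  then obtain c where c: "\<And>s. s \<in> I \<Longrightarrow> g s = c" by auto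
  have "g s0 = 0" unfolding g_def d_def using phi r0p by (simp add: field_simps)
  then have g0: "\<And>s. s \<in> I \<Longrightarrow> g s = 0" using c s0 by metis
  show ?thesis
  proof (intro exI conjI ballI)
    show "w\<^sup>2 * r0\<^sup>2 = 1" unfolding w_def using r0p b2 by (simp add: power_divide)
  next
    fix s assume s: "s \<in> I"
    have "(x s - r0 * cos (w * s + d))\<^sup>2 + (y s - r0 * sin (w * s + d))\<^sup>2 = 0" using g0[OF s] g_def by simp
    then show "x s = r0 * cos (w * s + d)" by (simp add: sum_power2_eq_zero_iff)
  next
    fix s assume s: "s \<in> I"
    have "(x s - r0 * cos (w * s + d))\<^sup>2 + (y s - r0 * sin (w * s + d))\<^sup>2 = 0" using g0[OF s] g_def by simp
    then show "y s = r0 * sin (w * s + d)" by (simp add: sum_power2_eq_zero_iff)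
  qed
qed

end

theorem theorem1:
  fixes x y :: "real \<Rightarrow> real" and I :: "real set"
  assumes "open I" and "is_interval I" and "I \<noteq> {}"
    and "smooth_on1 I x" and "smooth_on1 I y"
    and "\<forall>s\<in>I. (deriv x s)\<^sup>2 + (deriv y s)\<^sup>2 = 1"
    and "\<forall>s\<in>I. (x s)\<^sup>2 + (y s)\<^sup>2 > 0"
    and "\<forall>s\<in>I. \<forall>t. gauss_curvature x y s t = 0"
  shows "pointwise_1type x y I \<longleftrightarrow>
           totally_geodesic x y I \<or>
           (\<exists>b0 lam d. b0\<^sup>2 * lam\<^sup>2 = 1 \<and>
              (\<forall>s\<in>I. x s = lam * cos (b0 * s + d) \<and> y s = lam * sin (b0 * s + d)))"
proof -
  interpret flat x y I
    using assms by unfold_locales auto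
  obtain s0 where s0: "s0 \<in> I" using assms(3) by auto
  show ?thesis
  proof
    assume h: "pointwise_1type x y I"
    then obtain f C where eq: "\<forall>s\<in>I. \<forall>t. laplacian x y (gauss_map x y) s t = f s t *\<^sub>R (gauss_map x y s t + C)"
      unfolding pointwise_1type_def by blast
    have "aa = 0 \<or> bb = 0" using cone_not_1type[OF _ _ s0 eq] by blast
    then show "totally_geodesic x y I \<or>
           (\<exists>b0 lam d. b0\<^sup>2 * lam\<^sup>2 = 1 \<and>
              (\<forall>s\<in>I. x s = lam * cos (b0 * s + d) \<and> y s = lam * sin (b0 * s + d)))"
      using tg_b0 a0_circ[OF _ s0] by blast
  next
    assume "totally_geodesic x y I \<or>
           (\<exists>b0 lam d. b0\<^sup>2 * lam\<^sup>2 = 1 \<and>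
              (\<forall>s\<in>I. x s = lam * cos (b0 * s + d) \<and> y s = lam * sin (b0 * s + d)))"
    then show "pointwise_1type x y I"
    proof
      assume "totally_geodesic x y I"
      then show ?thesis using b0_tg[OF _ s0] b0_1type by blast
    next
      assume "\<exists>b0 lam d. b0\<^sup>2 * lam\<^sup>2 = 1 \<and>
              (\<forall>s\<in>I. x s = lam * cos (b0 * s + d) \<and> y s = lam * sin (b0 * s + d))"
      then obtain b0 lam d where "\<forall>s\<in>I. x s = lam * cos (b0 * s + d) \<and> y s = lam * sin (b0 * s + d)" by blast
      then have "aa = 0" using circ_a0 s0 by blast
      then show ?thesis using a0_1type s0 by blast
    qed
  qed
qed

end
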